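(* Let $n\ge4$ and let $W_n$ be the wheel graph on $n$ vertices with oriented incidence matrix \[N=\left[\begin{array}{c|c} \mathbf{1}^T & \mathbf{0}^T \\ \hline -I_{n-1} & C \end{array}\right],\] where $C$ is the circulant matrix $\mathrm{circ}(1,0,\ldots,0,-1)$ of order $n-1$. Then $CC^T+I_{n-1}$ is invertible and the Moore–Penrose inverse of $N$ is \[N^+=\frac{1}{n} \left[\begin{array}{r|c} \mathbf{1} & X \\ \hline \mathbf{0} & Y \end{array}\right],\] where $X=(CC^T+I_{n-1})^{-1}(J_{n-1}-nI_{n-1})$ and $Y=-C^TX$.
   Context: The wheel graph $W_n$ ($n\ge4$) is a cycle on $n-1$ vertices together with a hub vertex adjacent to every cycle vertex. An oriented incidence matrix of a graph is obtained from the (0/1 vertex-edge) incidence matrix by changing one of the two $1$'s in each column to $-1$; the displayed block form corresponds to listing the hub first, then the cycle vertices in cyclic order, with the $n-1$ spokes (oriented away from the hub) listed first followed by the cycle edges. For $c_0,\dots,c_{k-1}$, $\mathrm{circ}(c_0,\ldots,c_{k-1})$ denotes the $k\times k$ circulant matrix whose $(i,j)$-entry is $c_{(j-i)\bmod k}$. $\mathbf 1$ is the all-ones column vector of length $n-1$, $\mathbf 0$ the zero vector, $J_{n-1}$ the $(n-1)\times(n-1)$ all-ones matrix, $I_{n-1}$ the identity. The Moore–Penrose inverse $A^+$ of a real matrix $A$ is the unique matrix with $AA^+A=A$, $A^+AA^+=A^+$, $(AA^+)^T=AA^+$, $(A^+A)^T=A^+A$. *)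

theory Defs
  imports "Jordan_Normal_Form.Gauss_Jordan_Elimination"
begin

definition circ_mat :: "nat \<Rightarrow> (nat \<Rightarrow> real) \<Rightarrow> real mat" where
  "circ_mat k c = mat k k (\<lambda>(i,j). c ((j + k - i) mod k))"

definition wheel_C :: "nat \<Rightarrow> real mat" where
  "wheel_C n = circ_mat (n - 1) (\<lambda>t. if t = 0 then 1 else if t = n - 2 then -1 else 0)"

definition wheel_N :: "nat \<Rightarrow> real mat" where
  "wheel_N n = four_block_mat
     (mat 1 (n - 1) (\<lambda>_. 1)) (0\<^sub>m 1 (n - 1))
     (- (1\<^sub>m (n - 1))) (wheel_C n)"

definition all_ones_mat :: "nat \<Rightarrow> nat \<Rightarrow> real mat" where
  "all_ones_mat r c = mat r c (\<lambda>_. 1)"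

definition is_moore_penrose_inverse :: "real mat \<Rightarrow> real mat \<Rightarrow> bool" where
  "is_moore_penrose_inverse A B \<longleftrightarrow>
     B \<in> carrier_mat (dim_col A) (dim_row A) \<and>
     A * B * A = A \<and> B * A * B = B \<and>
     transpose_mat (A * B) = A * B \<and> transpose_mat (B * A) = B * A"

end

theory Submission
  imports Defs "Jordan_Normal_Form.Determinant"
begin

lemma wheel_C_carrier: "wheel_C n \<in> carrier_mat (n - 1) (n - 1)"
  unfolding wheel_C_def circ_mat_def by simp

lemma wheel_C_entry:
  assumes "n \<ge> 4" "i < n - 1" "j < n - 1"
  shows "wheel_C n $$ (i,j) = (if i = j then 1 else 0) - (if i = (if j = n - 2 then 0 else j + 1) then 1 else 0)"
proof -
  let ?m = "n - 1"
  have e: "wheel_C n $$ (i,j) = (if (j + ?m - i) mod ?m = 0 then 1 else if (j + ?m - i) mod ?m = n - 2 then -1 else 0)"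
    unfolding wheel_C_def circ_mat_def using assms by simp
  show ?thesis
  proof (cases "i \<le> j")
    case True
    have h: "j + ?m - i = (j - i) + ?m" using True by simp
    have "(j + ?m - i) mod ?m = (j - i) mod ?m" unfolding h by (rule mod_add_self2)
    also have "\<dots> = j - i" using assms by (intro mod_less) linarith
    finally have "(j + ?m - i) mod ?m = j - i" .
    moreover have "j - i = n - 2 \<longleftrightarrow> i = 0 \<and> j = n - 2" using True assms by linarith
    ultimately show ?thesis unfolding e using assms True by (simp split: if_split)
  next
    case False
    then have "(j + ?m - i) mod ?m = j + ?m - i" using assms False by (intro mod_less) linarith
    moreover have "j + ?m - i \<noteq> 0" using False assms by linarith
    moreover have "j + ?m - i = n - 2 \<longleftrightarrow> i = j + 1" using False assms by linarith
    moreover have "j \<noteq> n - 2" using False assms by linarith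
    ultimately show ?thesis unfolding e using assms False by (simp split: if_split)
  qed
qed

lemma ones_transpose[simp]: "transpose_mat (all_ones_mat a b) = all_ones_mat b a"
  unfolding all_ones_mat_def by (rule eq_matI) auto

lemma ones_carrier[simp]: "all_ones_mat a b \<in> carrier_mat a b"
  unfolding all_ones_mat_def by simp

lemma ones_mult: "all_ones_mat a b * all_ones_mat b c = real b \<cdot>\<^sub>m all_ones_mat a c"
  unfolding all_ones_mat_def by (rule eq_matI) (auto simp: scalar_prod_def)

declare minus_carrier_mat[simp] uminus_carrier_mat[simp]

lemma add_eq_imp_minus:
  fixes A B D :: "real mat"
  assumes "A \<in> carrier_mat a b" "B \<in> carrier_mat a b" "D \<in> carrier_mat a b" "A + B = D"
  shows "A = D - B"
proof (rule eq_matI)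
  fix i j assume ij: "i < dim_row (D - B)" "j < dim_col (D - B)"
  have "(A + B) $$ (i,j) = D $$ (i,j)" using assms(4) by simp
  moreover have "(A + B) $$ (i,j) = A $$ (i,j) + B $$ (i,j)" using assms(1,2) ij by simp
  moreover have "(D - B) $$ (i,j) = D $$ (i,j) - B $$ (i,j)" using assms(2,3) ij by simp
  ultimately show "A $$ (i,j) = (D - B) $$ (i,j)" by linarith
qed (use assms in auto)

lemma transpose_smult_mat: "transpose_mat (k \<cdot>\<^sub>m (A :: real mat)) = k \<cdot>\<^sub>m transpose_mat A"
  by (rule eq_matI) auto

lemma core:
  fixes C P :: "real mat" and n :: nat and r :: real
  defines "m \<equiv> n - 1"
  defines "u \<equiv> all_ones_mat m 1" and "w \<equiv> all_ones_mat 1 m" and "J \<equiv> all_ones_mat m m"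
  defines "M \<equiv> C * transpose_mat C + 1\<^sub>m m"
  assumes n1: "n \<ge> 1" and r: "r = real n"
  and C: "C \<in> carrier_mat m m" and P: "P \<in> carrier_mat m m"
  and cs: "w * C = 0\<^sub>m 1 m"
  and PM: "P * M = 1\<^sub>m m" and MP: "M * P = 1\<^sub>m m"
  shows "is_moore_penrose_inverse
     (four_block_mat w (0\<^sub>m 1 m) (- (1\<^sub>m m)) C)
     ((1 / r) \<cdot>\<^sub>m four_block_mat u (P * (J - r \<cdot>\<^sub>m 1\<^sub>m m)) (0\<^sub>m m 1) (- (transpose_mat C * (P * (J - r \<cdot>\<^sub>m 1\<^sub>m m)))))"
proof -
  have rm: "real m = r - 1" using n1 r unfolding m_def by simp
  have r0: "r \<noteq> 0" using n1 r by simp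
  have u: "u \<in> carrier_mat m 1" and w: "w \<in> carrier_mat 1 m" and J: "J \<in> carrier_mat m m"
    unfolding u_def w_def J_def by auto
  have CT: "transpose_mat C \<in> carrier_mat m m" using C by simp
  have M: "M \<in> carrier_mat m m" unfolding M_def using C by simp
  have I: "1\<^sub>m m \<in> carrier_mat m m" by simp
  have uw: "u * w = J" unfolding u_def w_def J_def ones_mult by (rule eq_matI) auto
  have wu: "w * u = real m \<cdot>\<^sub>m 1\<^sub>m 1" unfolding u_def w_def ones_mult
    unfolding all_ones_mat_def by (rule eq_matI) auto
  have wJ: "w * J = real m \<cdot>\<^sub>m w" unfolding w_def J_def ones_mult ..
  have Ju: "J * u = real m \<cdot>\<^sub>m u" unfolding u_def J_def ones_mult ..
  have CTu: "transpose_mat C * u = 0\<^sub>m m 1"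
  proof -
    have "transpose_mat C * u = transpose_mat (w * C)"
      using transpose_mult[OF w C] unfolding w_def u_def by simp
    then show ?thesis using cs by simp
  qed
  have JC: "J * C = 0\<^sub>m m m"
    unfolding uw[symmetric] using u w C cs by (simp add: right_mult_zero_mat)
  have CTJ: "transpose_mat C * J = 0\<^sub>m m m"
    unfolding uw[symmetric] using u w CT CTu
    by (simp add: assoc_mult_mat[symmetric, of _ m m u 1 w m] left_mult_zero_mat)
  have Mu: "M * u = u" unfolding M_def using C CT u CTu
    by (simp add: add_mult_distrib_mat[of _ m m _ u 1] right_mult_zero_mat)
  have wM: "w * M = w" unfolding M_def using C CT w cs
    by (simp add: mult_add_distrib_mat[of w 1 m _ m] assoc_mult_mat[symmetric, of w 1 m C m]
        left_mult_zero_mat)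
  have Pu: "P * u = u"
  proof -
    have "P * u = P * (M * u)" using Mu by simp
    also have "\<dots> = (P * M) * u" using P M u by simp
    finally show ?thesis using PM u by simp
  qed
  have wP: "w * P = w"
  proof -
    have "w * P = (w * M) * P" using wM by simp
    also have "\<dots> = w * (M * P)" using P M w by simp
    finally show ?thesis using MP w by simp
  qed
  have MT: "transpose_mat M = M"
  proof -
    have "transpose_mat M = transpose_mat (C * transpose_mat C) + transpose_mat (1\<^sub>m m)"
      unfolding M_def using C by (intro transpose_add) auto
    then show ?thesis by (simp add: transpose_mult[OF C CT] M_def)
  qed
  have PT: "transpose_mat P = P"
  proof -
    have "transpose_mat P * M = 1\<^sub>m m"
      using arg_cong[OF MP, of transpose_mat] transpose_mult[OF M P] MT by simp
    have PT': "transpose_mat P \<in> carrier_mat m m" using P by simp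
    have "transpose_mat P = transpose_mat P * (M * P)" using MP PT' by simp
    also have "\<dots> = (transpose_mat P * M) * P" using PT' M P by (rule assoc_mult_mat[symmetric])
    finally show ?thesis using \<open>transpose_mat P * M = 1\<^sub>m m\<close> P by simp
  qed
  define X where "X = P * (J - r \<cdot>\<^sub>m 1\<^sub>m m)"
  define Y where "Y = - (transpose_mat C * X)"
  define Q where "Q = transpose_mat C * P"
  have Q: "Q \<in> carrier_mat m m" unfolding Q_def using CT P by simp
  have PJ: "P * J = J"
  proof -
    have "P * J = (P * u) * w" unfolding uw[symmetric] using P u w by simp
    then show ?thesis using Pu uw by simp
  qed
  have JP: "J * P = J"
  proof -
    have "J * P = u * (w * P)" unfolding uw[symmetric] using P u w by simp
    then show ?thesis using wP uw by simp
  qed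
  have X_eq: "X = J - r \<cdot>\<^sub>m P"
  proof -
    have "X = P * J - P * (r \<cdot>\<^sub>m 1\<^sub>m m)" unfolding X_def using P J by (intro mult_minus_distrib_mat) auto
    also have "\<dots> = J - r \<cdot>\<^sub>m P" unfolding PJ using P by (simp add: mult_smult_distrib[OF P one_carrier_mat])
    finally show ?thesis .
  qed
  have X: "X \<in> carrier_mat m m" unfolding X_eq using J P by simp
  have Y_eq: "Y = r \<cdot>\<^sub>m Q"
  proof -
    have "transpose_mat C * X = transpose_mat C * J - transpose_mat C * (r \<cdot>\<^sub>m P)"
      unfolding X_eq using CT J P by (intro mult_minus_distrib_mat) auto
    also have "\<dots> = 0\<^sub>m m m - r \<cdot>\<^sub>m Q" unfolding CTJ Q_def using CT P by (simp add: mult_smult_distrib)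
    finally show ?thesis unfolding Y_def using Q by (intro eq_matI) auto
  qed
  have Y: "Y \<in> carrier_mat m m" unfolding Y_eq using Q by simp
  have CQ: "C * Q = 1\<^sub>m m - P"
  proof (rule add_eq_imp_minus)
    have "1\<^sub>m m = M * P" using MP by simp
    also have "\<dots> = C * transpose_mat C * P + 1\<^sub>m m * P" unfolding M_def using C CT P
      by (intro add_mult_distrib_mat) auto
    also have "\<dots> = C * Q + P" unfolding Q_def using C CT P by simp
    finally show "C * Q + P = 1\<^sub>m m" by simp
  qed (use C Q P in auto)

  define N where "N = four_block_mat w (0\<^sub>m 1 m) (- (1\<^sub>m m)) C"
  define F where "F = four_block_mat u X (0\<^sub>m m 1) Y"
  define G where "G = four_block_mat (real m \<cdot>\<^sub>m 1\<^sub>m 1) (- w) (- u) (r \<cdot>\<^sub>m 1\<^sub>m m - J)"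
  define H where "H = four_block_mat (r \<cdot>\<^sub>m P) (- (r \<cdot>\<^sub>m (P * C))) (- (r \<cdot>\<^sub>m Q)) (r \<cdot>\<^sub>m (Q * C))"
  have z1: "0\<^sub>m 1 m \<in> carrier_mat 1 m" and z2: "0\<^sub>m m 1 \<in> carrier_mat m 1" and mI: "- 1\<^sub>m m \<in> carrier_mat m m"
    and I1: "1\<^sub>m 1 \<in> carrier_mat 1 1" by auto
  have PC: "P * C \<in> carrier_mat m m" using P C by simp
  have QC: "Q * C \<in> carrier_mat m m" using Q C by simp
  have Nc: "N \<in> carrier_mat (1 + m) (m + m)" unfolding N_def by (rule four_block_carrier_mat[OF w C])
  have Fc: "F \<in> carrier_mat (m + m) (1 + m)" unfolding F_def by (rule four_block_carrier_mat[OF u Y])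
  have Gc: "G \<in> carrier_mat (1 + m) (1 + m)" unfolding G_def using J by (intro four_block_carrier_mat) auto
  have Hc: "H \<in> carrier_mat (m + m) (m + m)" unfolding H_def using P QC by (intro four_block_carrier_mat) auto
  have b1: "w * u + 0\<^sub>m 1 m * 0\<^sub>m m 1 = real m \<cdot>\<^sub>m 1\<^sub>m 1" unfolding wu by (rule eq_matI) auto
  have wX: "w * X = real m \<cdot>\<^sub>m w - r \<cdot>\<^sub>m w"
  proof -
    have "w * X = w * J - w * (r \<cdot>\<^sub>m P)" unfolding X_eq using w J P by (intro mult_minus_distrib_mat) auto
    also have "\<dots> = real m \<cdot>\<^sub>m w - r \<cdot>\<^sub>m w" unfolding wJ mult_smult_distrib[OF w P] wP ..
    finally show ?thesis .
  qed
  have b2: "w * X + 0\<^sub>m 1 m * Y = - w" unfolding wX using w Y rm by (intro eq_matI) (auto simp: algebra_simps)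
  have b3: "- 1\<^sub>m m * u + C * 0\<^sub>m m 1 = - u" using u C by (intro eq_matI) auto
  have CY: "C * Y = r \<cdot>\<^sub>m (1\<^sub>m m - P)" unfolding Y_eq mult_smult_distrib[OF C Q] CQ ..
  have b4: "- 1\<^sub>m m * X + C * Y = r \<cdot>\<^sub>m 1\<^sub>m m - J" unfolding CY using X unfolding X_eq
    using J P by (intro eq_matI) (auto simp: algebra_simps)
  have NF: "N * F = G" unfolding N_def F_def G_def
    mult_four_block_mat[OF w z1 mI C u X z2 Y] b1 b2 b3 b4 ..
  have GT: "transpose_mat G = G" unfolding G_def
    transpose_four_block_mat[OF smult_carrier_mat[OF I1] uminus_carrier_mat[OF w] uminus_carrier_mat[OF u] minus_carrier_mat[OF J]]
    unfolding u_def w_def J_def all_ones_mat_def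
    by (intro arg_cong4[where f = four_block_mat]; rule eq_matI; auto)
  have c1: "real m \<cdot>\<^sub>m 1\<^sub>m 1 * w + - w * - 1\<^sub>m m = r \<cdot>\<^sub>m w"
    unfolding mult_smult_assoc_mat[OF I1 w] using w rm by (intro eq_matI) (auto simp: algebra_simps)
  have c2: "real m \<cdot>\<^sub>m 1\<^sub>m 1 * 0\<^sub>m 1 m + - w * C = r \<cdot>\<^sub>m 0\<^sub>m 1 m"
    using cs w C by (intro eq_matI) auto
  have c3: "- u * w + (r \<cdot>\<^sub>m 1\<^sub>m m - J) * - 1\<^sub>m m = r \<cdot>\<^sub>m (- 1\<^sub>m m)"
    using uw u w J by (intro eq_matI) auto
  have JC': "(r \<cdot>\<^sub>m 1\<^sub>m m - J) * C = r \<cdot>\<^sub>m C - 0\<^sub>m m m"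
  proof -
    have "(r \<cdot>\<^sub>m 1\<^sub>m m - J) * C = (r \<cdot>\<^sub>m 1\<^sub>m m) * C - J * C" using J C by (intro minus_mult_distrib_mat) auto
    then show ?thesis unfolding JC mult_smult_assoc_mat[OF I C] using C by simp
  qed
  have c4: "- u * 0\<^sub>m 1 m + (r \<cdot>\<^sub>m 1\<^sub>m m - J) * C = r \<cdot>\<^sub>m C"
    unfolding JC' using u C by (intro eq_matI) auto
  have GN: "G * N = r \<cdot>\<^sub>m N" unfolding N_def G_def
    mult_four_block_mat[OF smult_carrier_mat[OF I1] uminus_carrier_mat[OF w] uminus_carrier_mat[OF u] minus_carrier_mat[OF J] w z1 mI C]
    c1 c2 c3 c4 smult_four_block_mat[OF w z1 mI C] ..

  have d1: "u * w + X * - 1\<^sub>m m = r \<cdot>\<^sub>m P" unfolding uw X_eq using J P by (intro eq_matI) auto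
  have XC: "X * C = 0\<^sub>m m m - r \<cdot>\<^sub>m (P * C)"
  proof -
    have "X * C = J * C - (r \<cdot>\<^sub>m P) * C" unfolding X_eq using J P C by (intro minus_mult_distrib_mat) auto
    then show ?thesis unfolding JC mult_smult_assoc_mat[OF P C] .
  qed
  have d2: "u * 0\<^sub>m 1 m + X * C = - (r \<cdot>\<^sub>m (P * C))" unfolding XC using u PC P C by (intro eq_matI) auto
  have d3: "0\<^sub>m m 1 * w + Y * - 1\<^sub>m m = - (r \<cdot>\<^sub>m Q)" unfolding Y_eq using w Q by (intro eq_matI) auto
  have d4: "0\<^sub>m m 1 * 0\<^sub>m 1 m + Y * C = r \<cdot>\<^sub>m (Q * C)" unfolding Y_eq mult_smult_assoc_mat[OF Q C]
    using QC by (intro eq_matI) auto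
  have FN: "F * N = H" unfolding N_def F_def H_def
    mult_four_block_mat[OF u X z2 Y w z1 mI C] d1 d2 d3 d4 ..
  have QT: "transpose_mat Q = P * C" unfolding Q_def transpose_mult[OF CT P] PT by simp
  have QCT: "transpose_mat (Q * C) = Q * C"
  proof -
    have "transpose_mat (Q * C) = transpose_mat C * (P * C)" unfolding transpose_mult[OF Q C] QT ..
    then show ?thesis unfolding Q_def using CT P C by simp
  qed
  have PCT: "transpose_mat (P * C) = Q" using arg_cong[OF QT, of transpose_mat] by simp
  have HT: "transpose_mat H = H" unfolding H_def
    transpose_four_block_mat[OF smult_carrier_mat[OF P] uminus_carrier_mat[OF smult_carrier_mat[OF PC]]
      uminus_carrier_mat[OF smult_carrier_mat[OF Q]] smult_carrier_mat[OF QC]]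
    by (simp add: transpose_smult_mat transpose_uminus PT QT QCT PCT)
  have e1: "r \<cdot>\<^sub>m P * u + - (r \<cdot>\<^sub>m (P * C)) * 0\<^sub>m m 1 = r \<cdot>\<^sub>m u"
    unfolding mult_smult_assoc_mat[OF P u] Pu using u PC P C by (intro eq_matI) auto
  have PX: "P * X = J - r \<cdot>\<^sub>m (P * P)"
  proof -
    have "P * X = P * J - P * (r \<cdot>\<^sub>m P)" unfolding X_eq using J P by (intro mult_minus_distrib_mat) auto
    then show ?thesis unfolding PJ mult_smult_distrib[OF P P] .
  qed
  have PCY: "P * C * Y = r \<cdot>\<^sub>m (P - P * P)"
  proof -
    have "P * C * Y = r \<cdot>\<^sub>m (P * (C * Q))" unfolding Y_eq mult_smult_distrib[OF PC Q] using P C Q by simp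
    also have "P * (C * Q) = P * 1\<^sub>m m - P * P" unfolding CQ using P by (intro mult_minus_distrib_mat) auto
    finally show ?thesis using P by simp
  qed
  have m1: "- (r \<cdot>\<^sub>m (P * C)) * Y = - (r \<cdot>\<^sub>m (r \<cdot>\<^sub>m (P - P * P)))"
  proof -
    have "- (r \<cdot>\<^sub>m (P * C)) * Y = - ((r \<cdot>\<^sub>m (P * C)) * Y)" using PC Y by (intro uminus_mult_left_mat) auto
    then show ?thesis by (simp only: mult_smult_assoc_mat[OF PC Y] PCY)
  qed
  have e2: "r \<cdot>\<^sub>m P * X + - (r \<cdot>\<^sub>m (P * C)) * Y = r \<cdot>\<^sub>m X"
    unfolding mult_smult_assoc_mat[OF P X] m1 PX
    unfolding X_eq using J P by (intro eq_matI) (auto simp: algebra_simps)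
  have Qu: "Q * u = 0\<^sub>m m 1" unfolding Q_def using CT P u Pu CTu by simp
  have m3: "- (r \<cdot>\<^sub>m Q) * u = - (r \<cdot>\<^sub>m 0\<^sub>m m 1)"
  proof -
    have "- (r \<cdot>\<^sub>m Q) * u = - ((r \<cdot>\<^sub>m Q) * u)" using Q u by (intro uminus_mult_left_mat) auto
    then show ?thesis by (simp only: mult_smult_assoc_mat[OF Q u] Qu)
  qed
  have e3: "- (r \<cdot>\<^sub>m Q) * u + r \<cdot>\<^sub>m (Q * C) * 0\<^sub>m m 1 = r \<cdot>\<^sub>m 0\<^sub>m m 1"
    unfolding m3 using QC Q C by (intro eq_matI) auto
  have QX: "Q * X = 0\<^sub>m m m - r \<cdot>\<^sub>m (Q * P)"
  proof -
    have "Q * X = Q * J - Q * (r \<cdot>\<^sub>m P)" unfolding X_eq using J P Q by (intro mult_minus_distrib_mat) auto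
    moreover have "Q * J = 0\<^sub>m m m" unfolding Q_def using CT P J PJ CTJ by simp
    ultimately show ?thesis unfolding mult_smult_distrib[OF Q P] by simp
  qed
  have QCY: "Q * C * Y = r \<cdot>\<^sub>m (Q - Q * P)"
  proof -
    have "Q * C * Y = r \<cdot>\<^sub>m (Q * (C * Q))" unfolding Y_eq mult_smult_distrib[OF QC Q] using Q C by simp
    also have "Q * (C * Q) = Q * 1\<^sub>m m - Q * P" unfolding CQ using P Q by (intro mult_minus_distrib_mat) auto
    finally show ?thesis using Q by simp
  qed
  have m2: "- (r \<cdot>\<^sub>m Q) * X = - (r \<cdot>\<^sub>m (0\<^sub>m m m - r \<cdot>\<^sub>m (Q * P)))"
  proof -
    have "- (r \<cdot>\<^sub>m Q) * X = - ((r \<cdot>\<^sub>m Q) * X)" using Q X by (intro uminus_mult_left_mat) auto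
    then show ?thesis by (simp only: mult_smult_assoc_mat[OF Q X] QX)
  qed
  have e4: "- (r \<cdot>\<^sub>m Q) * X + r \<cdot>\<^sub>m (Q * C) * Y = r \<cdot>\<^sub>m Y"
    unfolding m2 mult_smult_assoc_mat[OF QC Y] QCY
    unfolding Y_eq using Q P by (intro eq_matI) (auto simp: algebra_simps)
  have HF: "H * F = r \<cdot>\<^sub>m F" unfolding H_def F_def
    mult_four_block_mat[OF smult_carrier_mat[OF P] uminus_carrier_mat[OF smult_carrier_mat[OF PC]]
      uminus_carrier_mat[OF smult_carrier_mat[OF Q]] smult_carrier_mat[OF QC] u X z2 Y]
    e1 e2 e3 e4 smult_four_block_mat[OF u X z2 Y] ..
  have NB: "N * ((1 / r) \<cdot>\<^sub>m F) = (1 / r) \<cdot>\<^sub>m G" unfolding mult_smult_distrib[OF Nc Fc] NF ..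
  have BN: "((1 / r) \<cdot>\<^sub>m F) * N = (1 / r) \<cdot>\<^sub>m H" unfolding mult_smult_assoc_mat[OF Fc Nc] FN ..
  have "is_moore_penrose_inverse N ((1 / r) \<cdot>\<^sub>m F)"
    unfolding is_moore_penrose_inverse_def
  proof (intro conjI)
    show "(1 / r) \<cdot>\<^sub>m F \<in> carrier_mat (dim_col N) (dim_row N)" using Fc Nc by simp
    show "N * ((1 / r) \<cdot>\<^sub>m F) * N = N" unfolding NB mult_smult_assoc_mat[OF Gc Nc] GN
      using Nc r0 by (intro eq_matI) auto
    show "(1 / r) \<cdot>\<^sub>m F * N * ((1 / r) \<cdot>\<^sub>m F) = (1 / r) \<cdot>\<^sub>m F" unfolding BN
      mult_smult_assoc_mat[OF Hc smult_carrier_mat[OF Fc]] mult_smult_distrib[OF Hc Fc] HF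
      using Fc r0 by (intro eq_matI) auto
    show "transpose_mat (N * ((1 / r) \<cdot>\<^sub>m F)) = N * ((1 / r) \<cdot>\<^sub>m F)"
      unfolding NB transpose_smult_mat GT ..
    show "transpose_mat ((1 / r) \<cdot>\<^sub>m F * N) = (1 / r) \<cdot>\<^sub>m F * N"
      unfolding BN transpose_smult_mat HT ..
  qed
  then show ?thesis unfolding N_def F_def X_def Y_def .
qed


lemma wheel_C_colsum:
  assumes n: "n \<ge> 4"
  shows "all_ones_mat 1 (n - 1) * wheel_C n = 0\<^sub>m 1 (n - 1)"
proof (rule eq_matI)
  show "dim_row (all_ones_mat 1 (n - 1) * wheel_C n) = dim_row (0\<^sub>m 1 (n - 1))" by (simp add: all_ones_mat_def)
  show "dim_col (all_ones_mat 1 (n - 1) * wheel_C n) = dim_col (0\<^sub>m 1 (n - 1))"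
    using wheel_C_carrier[of n] by simp
  fix i j assume i: "i < dim_row (0\<^sub>m 1 (n - 1))" and j: "j < dim_col (0\<^sub>m 1 (n - 1))"
  define k where "k = (if j = n - 2 then 0 else j + 1)"
  have k: "k < n - 1" "k \<noteq> j" using j n unfolding k_def by auto
  have C: "wheel_C n \<in> carrier_mat (n - 1) (n - 1)" by (rule wheel_C_carrier)
  have "(all_ones_mat 1 (n - 1) * wheel_C n) $$ (i, j) = (\<Sum>l = 0..<n - 1. wheel_C n $$ (l, j))"
    using i j C unfolding all_ones_mat_def by (simp add: scalar_prod_def)
  also have "\<dots> = (\<Sum>l = 0..<n - 1. (if l = j then 1 else 0) - (if l = k then 1 else 0))"
    using wheel_C_entry[OF n _, of _ j] j unfolding k_def by (intro sum.cong) auto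
  also have "\<dots> = 0" using j k by (simp add: sum_subtractf)
  finally show "(all_ones_mat 1 (n - 1) * wheel_C n) $$ (i, j) = 0\<^sub>m 1 (n - 1) $$ (i, j)"
    using i j by simp
qed

lemma self_sp_nonneg: "(v :: real vec) \<bullet> v \<ge> 0"
  unfolding scalar_prod_def by (intro sum_nonneg) auto

lemma self_sp_zero: assumes "v \<in> carrier_vec k" "(v :: real vec) \<bullet> v = 0" shows "v = 0\<^sub>v k"
proof (rule eq_vecI)
  fix i assume "i < dim_vec (0\<^sub>v k)"
  then have i: "i \<in> {0..<dim_vec v}" using assms by auto
  have "\<forall>l\<in>{0..<dim_vec v}. v $ l * v $ l = 0"
    using assms(2) unfolding scalar_prod_def by (subst sum_nonneg_eq_0_iff[symmetric]) auto
  then have "v $ i * v $ i = 0" using i by blast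
  then show "v $ i = 0\<^sub>v k $ i" using i assms by auto
qed (use assms in auto)

lemma M_det:
  fixes C :: "real mat"
  assumes C: "C \<in> carrier_mat k k"
  shows "det (C * transpose_mat C + 1\<^sub>m k) \<noteq> 0"
proof
  have M: "C * transpose_mat C + 1\<^sub>m k \<in> carrier_mat k k" using C by simp
  assume "det (C * transpose_mat C + 1\<^sub>m k) = 0"
  then obtain v where v: "v \<in> carrier_vec k" "v \<noteq> 0\<^sub>v k" "(C * transpose_mat C + 1\<^sub>m k) *\<^sub>v v = 0\<^sub>v k"
    using det_0_iff_vec_prod_zero[OF M] by blast
  have CT: "transpose_mat C \<in> carrier_mat k k" using C by simp
  define x where "x = transpose_mat C *\<^sub>v v"
  have x: "x \<in> carrier_vec k" unfolding x_def using CT v by simp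
  have "(C * transpose_mat C + 1\<^sub>m k) *\<^sub>v v = C *\<^sub>v x + v"
    unfolding x_def using C CT v by (simp add: add_mult_distrib_mat_vec[of _ k k])
  then have eq: "C *\<^sub>v x + v = 0\<^sub>v k" using v(3) by simp
  then have "v \<bullet> (C *\<^sub>v x + v) = 0" using v(1) by simp
  moreover have "v \<bullet> (C *\<^sub>v x + v) = v \<bullet> (C *\<^sub>v x) + v \<bullet> v"
    using C x v by (intro scalar_prod_add_distrib[of _ k]) auto
  moreover have "v \<bullet> (C *\<^sub>v x) = x \<bullet> x"
    using transpose_vec_mult_scalar[OF C x v(1)] unfolding x_def by simp
  ultimately have "x \<bullet> x + v \<bullet> v = 0" by simp
  then have "v \<bullet> v = 0" using self_sp_nonneg[of x] self_sp_nonneg[of v] by linarith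
  then show False using self_sp_zero[OF v(1)] v(2) by simp
qed

theorem mainTheorem6:
  fixes n :: nat
  assumes "n \<ge> 4"
  defines "C \<equiv> wheel_C n"
  defines "M \<equiv> C * transpose_mat C + 1\<^sub>m (n - 1)"
  defines "X \<equiv> the (mat_inverse M) * (all_ones_mat (n - 1) (n - 1) - of_nat n \<cdot>\<^sub>m 1\<^sub>m (n - 1))"
  defines "Y \<equiv> - (transpose_mat C * X)"
  shows "invertible_mat M \<and>
         is_moore_penrose_inverse (wheel_N n)
           ((1 / of_nat n) \<cdot>\<^sub>m four_block_mat
              (all_ones_mat (n - 1) 1) X
              (0\<^sub>m (n - 1) 1) Y)"
proof -
  have C: "C \<in> carrier_mat (n - 1) (n - 1)" unfolding C_def by (rule wheel_C_carrier)
  have Mc: "M \<in> carrier_mat (n - 1) (n - 1)" unfolding M_def using C by simp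
  have "det M \<noteq> 0" unfolding M_def by (rule M_det[OF C])
  from det_non_zero_imp_unit[OF Mc this] have U: "M \<in> Units (ring_mat TYPE(real) (n - 1) ())" .
  obtain P where P: "mat_inverse M = Some P"
    using mat_inverse(1)[OF Mc, of "()"] U by (cases "mat_inverse M") auto
  from mat_inverse(2)[OF Mc P] have MP: "M * P = 1\<^sub>m (n - 1)" and PM: "P * M = 1\<^sub>m (n - 1)"
    and Pc: "P \<in> carrier_mat (n - 1) (n - 1)" by auto
  have inv: "invertible_mat M"
    unfolding invertible_mat_def inverts_mat_def using Mc Pc MP PM by auto
  have "is_moore_penrose_inverse
     (four_block_mat (all_ones_mat 1 (n - 1)) (0\<^sub>m 1 (n - 1)) (- (1\<^sub>m (n - 1))) C)
     ((1 / real n) \<cdot>\<^sub>m four_block_mat (all_ones_mat (n - 1) 1)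
        (P * (all_ones_mat (n - 1) (n - 1) - real n \<cdot>\<^sub>m 1\<^sub>m (n - 1))) (0\<^sub>m (n - 1) 1)
        (- (transpose_mat C * (P * (all_ones_mat (n - 1) (n - 1) - real n \<cdot>\<^sub>m 1\<^sub>m (n - 1))))))"
    using core[of n "real n" C P] assms C Pc wheel_C_colsum[OF assms(1)] PM MP
    unfolding M_def C_def by simp
  moreover have "wheel_N n = four_block_mat (all_ones_mat 1 (n - 1)) (0\<^sub>m 1 (n - 1)) (- (1\<^sub>m (n - 1))) C"
    unfolding wheel_N_def C_def all_ones_mat_def ..
  ultimately show ?thesis using inv unfolding X_def Y_def P by simp
qed

end
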